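(* Let $R\subseteq S$, $\sigma$ be as in the context, and $n=n_1+\cdots+n_\ell$. Let $\mathbf{a}=(a_1,\ldots,a_\ell)\in(S^* )^\ell$ and $\beta_{i,j}\in S$ ($1\le i\le\ell$, $1\le j\le n_i$) satisfy: (i) $a_i-a_j^\beta\in S^*$ for all $\beta\in S^*$ and $1\le i<j\le\ell$; (ii) for each $i$, $\beta_{i,1},\ldots,\beta_{i,n_i}$ are $R$-linearly independent. Then the $n\times n$ matrix $M_n(\mathbf{a},\boldsymbol\beta)$ over $S$, whose rows are indexed by $s=0,1,\ldots,n-1$, whose columns are indexed by the pairs $(i,j)$ in the order $(1,1),\ldots,(1,n_1),\ldots,(\ell,1),\ldots,(\ell,n_\ell)$, and whose $(s,(i,j))$ entry is $\mathcal{D}_{a_i}^s(\beta_{i,j})$, is invertible.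
   Context: $R$ is a finite commutative chain ring with maximal ideal $\mathfrak{m}$, $q=|R/\mathfrak{m}|$; $S=R[x]/(h)$ with $h$ monic of degree $m$ irreducible modulo $\mathfrak{m}$, local with maximal ideal $\mathfrak{M}=\mathfrak{m}S$ and unit group $S^*=S\setminus\mathfrak{M}$. $\sigma$ is a ring automorphism of $S$ generating the Galois group of $R\subseteq S$, with fixed ring $R$, reducing modulo $\mathfrak{M}$ to $y\mapsto y^q$. For $a,\beta\in S$: $N_s(a)=\sigma^{s-1}(a)\cdots\sigma(a)a$ ($N_0(a)=1$) and $\mathcal{D}_a^s(\beta)=\sigma^s(\beta)N_s(a)$. For $\beta\in S^*$, $a^\beta=\sigma(\beta)a\beta^{-1}$. *)

theory Defs
  imports "HOL-Computational_Algebra.Polynomial" "Jordan_Normal_Form.Matrix"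
begin

text \<open>The ambient type 'a is the ring S; R is a subset of it.\<close>

definition subring :: "'a::comm_ring_1 set \<Rightarrow> bool" where
  "subring R \<longleftrightarrow> 0 \<in> R \<and> 1 \<in> R \<and>
     (\<forall>x\<in>R. \<forall>y\<in>R. x + y \<in> R \<and> x - y \<in> R \<and> x * y \<in> R)"

definition ideal_of :: "'a::comm_ring_1 set \<Rightarrow> 'a set \<Rightarrow> bool" where
  "ideal_of R I \<longleftrightarrow> I \<subseteq> R \<and> 0 \<in> I \<and>
     (\<forall>x\<in>I. \<forall>y\<in>I. x + y \<in> I \<and> x - y \<in> I) \<and> (\<forall>r\<in>R. \<forall>x\<in>I. r * x \<in> I)"

definition finite_chain_ring :: "'a::comm_ring_1 set \<Rightarrow> bool" where
  "finite_chain_ring R \<longleftrightarrow> subring R \<and> finite R \<and> (0::'a) \<noteq> 1 \<and>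
     (\<forall>I J. ideal_of R I \<longrightarrow> ideal_of R J \<longrightarrow> I \<subseteq> J \<or> J \<subseteq> I)"

definition max_ideal :: "'a::comm_ring_1 set \<Rightarrow> 'a set" where
  "max_ideal R = {r \<in> R. \<not> (\<exists>u\<in>R. r * u = 1)}"

text \<open>The residue field size q = |R/m|.\<close>
definition residue_card :: "'a::comm_ring_1 set \<Rightarrow> nat" where
  "residue_card R = card ((\<lambda>r. (\<lambda>x. r + x) ` max_ideal R) ` R)"

definition ext_ideal :: "'a::comm_ring_1 set \<Rightarrow> 'a set" where
  "ext_ideal I = {x. \<exists>(k::nat) (f::nat \<Rightarrow> 'a) g. (\<forall>i<k. f i \<in> I) \<and> x = (\<Sum>i<k. f i * g i)}"

text \<open>h monic over R and irreducible modulo m: there are no monic f, g over R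
  of positive degree with h \<equiv> f g (mod m) (residue-field factorizations lift
  to such monic f, g).\<close>
definition irreducible_mod :: "'a::comm_ring_1 set \<Rightarrow> 'a poly \<Rightarrow> bool" where
  "irreducible_mod R h \<longleftrightarrow> degree h \<ge> 1 \<and>
     \<not> (\<exists>f g. (\<forall>i. coeff f i \<in> R) \<and> (\<forall>i. coeff g i \<in> R) \<and>
          lead_coeff f = 1 \<and> lead_coeff g = 1 \<and> degree f \<ge> 1 \<and> degree g \<ge> 1 \<and>
          (\<forall>i. coeff (h - f * g) i \<in> max_ideal R))"

text \<open>S (= UNIV) is R[x]/(h) via x \<mapsto> \<theta>: h(\<theta>) = 0 and every element of S
  is uniquely an R-combination of 1, \<theta>, ..., \<theta>^(m-1).\<close>
definition presentation :: "'a::comm_ring_1 set \<Rightarrow> 'a poly \<Rightarrow> 'a \<Rightarrow> bool" where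
  "presentation R h \<theta> \<longleftrightarrow> (\<forall>i. coeff h i \<in> R) \<and> lead_coeff h = 1 \<and> poly h \<theta> = 0 \<and>
     (\<forall>y. \<exists>!c. (\<forall>i. c i \<in> R) \<and> (\<forall>i\<ge>degree h. c i = 0) \<and>
                y = (\<Sum>i<degree h. c i * \<theta> ^ i))"

definition ring_aut :: "('a::comm_ring_1 \<Rightarrow> 'a) \<Rightarrow> bool" where
  "ring_aut \<tau> \<longleftrightarrow> bij \<tau> \<and> \<tau> 1 = 1 \<and> (\<forall>x y. \<tau> (x + y) = \<tau> x + \<tau> y \<and> \<tau> (x * y) = \<tau> x * \<tau> y)"

definition galois_group :: "'a::comm_ring_1 set \<Rightarrow> ('a \<Rightarrow> 'a) set" where
  "galois_group R = {\<tau>. ring_aut \<tau> \<and> (\<forall>r\<in>R. \<tau> r = r)}"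

definition galois_setting :: "'a::comm_ring_1 set \<Rightarrow> 'a poly \<Rightarrow> 'a \<Rightarrow> ('a \<Rightarrow> 'a) \<Rightarrow> bool" where
  "galois_setting R h \<theta> \<sigma> \<longleftrightarrow>
     finite_chain_ring R \<and> presentation R h \<theta> \<and> irreducible_mod R h \<and>
     \<sigma> \<in> galois_group R \<and> (\<forall>\<tau>\<in>galois_group R. \<exists>k. \<tau> = \<sigma> ^^ k) \<and>
     {x. \<sigma> x = x} = R \<and>
     (\<forall>y. \<sigma> y - y ^ residue_card R \<in> ext_ideal (max_ideal R))"

definition normN :: "('a::comm_ring_1 \<Rightarrow> 'a) \<Rightarrow> nat \<Rightarrow> 'a \<Rightarrow> 'a" where
  "normN \<sigma> s a = (\<Prod>k<s. (\<sigma> ^^ k) a)"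

definition Dop :: "('a::comm_ring_1 \<Rightarrow> 'a) \<Rightarrow> 'a \<Rightarrow> nat \<Rightarrow> 'a \<Rightarrow> 'a" where
  "Dop \<sigma> a s \<beta> = (\<sigma> ^^ s) \<beta> * normN \<sigma> s a"

definition ring_inv :: "'a::comm_ring_1 \<Rightarrow> 'a" where
  "ring_inv b = (THE c. b * c = 1)"

definition twist :: "('a::comm_ring_1 \<Rightarrow> 'a) \<Rightarrow> 'a \<Rightarrow> 'a \<Rightarrow> 'a" where
  "twist \<sigma> a \<beta> = \<sigma> \<beta> * a * ring_inv \<beta>"

definition R_lin_indep :: "'a::comm_ring_1 set \<Rightarrow> nat \<Rightarrow> (nat \<Rightarrow> 'a) \<Rightarrow> bool" where
  "R_lin_indep R k \<beta> \<longleftrightarrow>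
     (\<forall>c. (\<forall>j\<in>{1..k}. c j \<in> R) \<longrightarrow> (\<Sum>j=1..k. c j * \<beta> j) = 0 \<longrightarrow> (\<forall>j\<in>{1..k}. c j = 0))"

definition col_labels :: "nat \<Rightarrow> (nat \<Rightarrow> nat) \<Rightarrow> (nat \<times> nat) list" where
  "col_labels l n = concat (map (\<lambda>i. map (\<lambda>j. (i, j)) [1..<Suc (n i)]) [1..<Suc l])"

definition Mmat :: "('a::comm_ring_1 \<Rightarrow> 'a) \<Rightarrow> nat \<Rightarrow> (nat \<Rightarrow> nat) \<Rightarrow> (nat \<Rightarrow> 'a)
                      \<Rightarrow> (nat \<Rightarrow> nat \<Rightarrow> 'a) \<Rightarrow> 'a mat" where
  "Mmat \<sigma> l n a \<beta> = (let N = (\<Sum>i=1..l. n i) in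
     mat N N (\<lambda>(s, c). case col_labels l n ! c of (i, j) \<Rightarrow> Dop \<sigma> (a i) s (\<beta> i j)))"

end

theory Submission
  imports Defs "Jordan_Normal_Form.Determinant"
begin


fun zz :: "('a::comm_ring_1 \<Rightarrow> 'a) \<Rightarrow> 'a \<Rightarrow> (nat \<Rightarrow> 'a) \<Rightarrow> nat \<Rightarrow> nat \<Rightarrow> 'a" where
  "zz \<sigma> u y N 0 = 0"
| "zz \<sigma> u y N (Suc j) = y (N - j) + zz \<sigma> u y N j * (\<sigma> ^^ (N - j)) u"

definition indep_mod :: "'a::comm_ring_1 set \<Rightarrow> 'a set \<Rightarrow> 'c set \<Rightarrow> ('c \<Rightarrow> 'a) \<Rightarrow> ('c \<Rightarrow> 'a) \<Rightarrow> bool" where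
  "indep_mod R I C A B \<longleftrightarrow> (\<forall>c \<alpha>. (\<forall>k\<in>C. c k \<in> R) \<longrightarrow> (\<Sum>k\<in>{k\<in>C. A k = \<alpha>}. c k * B k) \<in> I
       \<longrightarrow> (\<forall>k\<in>C. A k = \<alpha> \<longrightarrow> c k \<in> I))"

locale coreloc =
  fixes \<sigma> :: "'a::comm_ring_1 \<Rightarrow> 'a" and R :: "'a set" and I :: "'a set"
  assumes s_add: "\<And>x y. \<sigma> (x + y) = \<sigma> x + \<sigma> y"
    and s_mult: "\<And>x y. \<sigma> (x * y) = \<sigma> x * \<sigma> y"
    and s_one: "\<sigma> 1 = 1"
    and s_R: "\<And>r. r \<in> R \<Longrightarrow> \<sigma> r = r"
    and I_0: "0 \<in> I"
    and I_add: "\<And>x y. x \<in> I \<Longrightarrow> y \<in> I \<Longrightarrow> x + y \<in> I"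
    and I_mult: "\<And>x y. x \<in> I \<Longrightarrow> x * y \<in> I"
    and I_unit: "\<And>x. x \<notin> I \<Longrightarrow> x dvd 1"
    and one_I: "1 \<notin> I"
    and R_0: "0 \<in> R" and R_1: "1 \<in> R" and R_neg: "\<And>x. x \<in> R \<Longrightarrow> - x \<in> R"
    and kerprop: "\<And>\<delta>. \<sigma> \<delta> - \<delta> \<in> I \<Longrightarrow> \<exists>c\<in>R. \<delta> - c \<in> I"
begin

lemma s_zero: "\<sigma> 0 = 0"
  using s_add[of 0 0] by simp

lemma s_minus: "\<sigma> (- x) = - \<sigma> x"
  using s_add[of x "-x"] s_zero by (simp add: eq_neg_iff_add_eq_0 add.commute)

lemma s_diff: "\<sigma> (x - y) = \<sigma> x - \<sigma> y"
  using s_add[of x "-y"] s_minus by simp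

lemma sp_add: "(\<sigma>^^k) (x + y) = (\<sigma>^^k) x + (\<sigma>^^k) y"
  by (induction k) (auto simp: s_add)

lemma sp_mult: "(\<sigma>^^k) (x * y) = (\<sigma>^^k) x * (\<sigma>^^k) y"
  by (induction k) (auto simp: s_mult)

lemma sp_zero: "(\<sigma>^^k) 0 = 0"
  by (induction k) (auto simp: s_zero)

lemma sp_diff: "(\<sigma>^^k) (x - y) = (\<sigma>^^k) x - (\<sigma>^^k) y"
  by (induction k) (auto simp: s_diff)

lemma s_sum: "finite S \<Longrightarrow> \<sigma> (\<Sum>k\<in>S. f k) = (\<Sum>k\<in>S. \<sigma> (f k))"
  by (induction S rule: finite_induct) (auto simp: s_zero s_add)

lemma I_multl: "x \<in> I \<Longrightarrow> y * x \<in> I"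
  using I_mult[of x y] by (simp add: mult.commute)

lemma I_neg: "x \<in> I \<Longrightarrow> - x \<in> I"
  using I_mult[of x "-1"] by simp

lemma I_diff: "x \<in> I \<Longrightarrow> y \<in> I \<Longrightarrow> x - y \<in> I"
  using I_add[of x "-y"] I_neg by simp

lemma I_sum: "(\<And>k. k \<in> S \<Longrightarrow> f k \<in> I) \<Longrightarrow> (\<Sum>k\<in>S. f k) \<in> I"
  by (induction S rule: infinite_finite_induct) (auto simp: I_0 I_add)

lemma unit_notin: "x * y = 1 \<Longrightarrow> x \<notin> I"
  using I_mult one_I by metis

lemma Dop_Suc: "Dop \<sigma> a (Suc s) \<gamma> = (\<sigma>^^s) (\<sigma> \<gamma> * a) * normN \<sigma> s a"
  unfolding Dop_def normN_def by (simp add: sp_mult funpow_Suc_right del: funpow.simps)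

lemma Dop_0: "Dop \<sigma> a 0 \<gamma> = \<gamma>"
  unfolding Dop_def normN_def by simp

lemma Dop_lin: "Dop \<sigma> a s (\<sigma> \<gamma> * a - u * \<gamma>) = Dop \<sigma> a (Suc s) \<gamma> - (\<sigma>^^s) u * Dop \<sigma> a s \<gamma>"
  unfolding Dop_Suc by (simp add: Dop_def sp_diff sp_mult algebra_simps)

lemma division:
  fixes y :: "nat \<Rightarrow> 'a" and u a \<gamma> :: 'a and N :: nat
  defines "z \<equiv> \<lambda>s. zz \<sigma> u y N (N - s)"
  defines "r \<equiv> y 0 + z 0 * u"
  shows "(\<Sum>s<Suc N. y s * Dop \<sigma> a s \<gamma>) = (\<Sum>s<N. z s * Dop \<sigma> a s (\<sigma> \<gamma> * a - u * \<gamma>)) + r * \<gamma>"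
    and "z N = 0" and "\<And>s. s < N \<Longrightarrow> y (Suc s) = z s - z (Suc s) * (\<sigma>^^(Suc s)) u"
    and "y 0 = r - z 0 * u"
proof -
  show zN: "z N = 0" unfolding z_def by simp
  have zrec: "z s = y (Suc s) + z (Suc s) * (\<sigma>^^(Suc s)) u" if "s < N" for s
  proof -
    have "N - s = Suc (N - Suc s)" using that by simp
    moreover have "N - (N - Suc s) = Suc s" using that by simp
    ultimately show ?thesis unfolding z_def by (simp del: funpow.simps)
  qed
  then show "\<And>s. s < N \<Longrightarrow> y (Suc s) = z s - z (Suc s) * (\<sigma>^^(Suc s)) u" by simp
  show "y 0 = r - z 0 * u" unfolding r_def by simp
  let ?f = "\<lambda>s. z s * (\<sigma>^^s) u * Dop \<sigma> a s \<gamma>"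
  have shift: "(\<Sum>s<N. ?f (Suc s)) = (\<Sum>s<N. ?f s) - ?f 0"
  proof -
    have e1: "(\<Sum>s<Suc N. ?f s) = ?f 0 + (\<Sum>s<N. ?f (Suc s))" by (rule sum.lessThan_Suc_shift)
    have e2: "(\<Sum>s<Suc N. ?f s) = (\<Sum>s<N. ?f s)" using zN by simp
    have aux: "\<And>a b c d. (a::'a) = b + c \<Longrightarrow> a = d \<Longrightarrow> c = d - b" by simp
    show ?thesis by (rule aux[OF e1 e2])
  qed
  have h1: "(\<Sum>s<Suc N. y s * Dop \<sigma> a s \<gamma>) = y 0 * \<gamma> + (\<Sum>s<N. y (Suc s) * Dop \<sigma> a (Suc s) \<gamma>)"
    by (subst sum.lessThan_Suc_shift) (simp add: Dop_0)
  have h2: "(\<Sum>s<N. y (Suc s) * Dop \<sigma> a (Suc s) \<gamma>)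
      = (\<Sum>s<N. z s * Dop \<sigma> a (Suc s) \<gamma>) - (\<Sum>s<N. ?f (Suc s))"
    unfolding sum_subtractf[symmetric]
  proof (rule sum.cong)
    fix s assume "s \<in> {..<N}"
    then have "z s = y (Suc s) + z (Suc s) * (\<sigma>^^(Suc s)) u" using zrec by simp
    then have "z s * Dop \<sigma> a (Suc s) \<gamma> = y (Suc s) * Dop \<sigma> a (Suc s) \<gamma> + ?f (Suc s)"
      by (simp only: distrib_right)
    then show "y (Suc s) * Dop \<sigma> a (Suc s) \<gamma> = z s * Dop \<sigma> a (Suc s) \<gamma> - ?f (Suc s)"
      by (simp only: eq_diff_eq)
  qed simp
  have h3: "(\<Sum>s<N. z s * Dop \<sigma> a s (\<sigma> \<gamma> * a - u * \<gamma>)) = (\<Sum>s<N. z s * Dop \<sigma> a (Suc s) \<gamma>) - (\<Sum>s<N. ?f s)"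
    unfolding sum_subtractf[symmetric] Dop_lin by (simp add: right_diff_distrib mult.assoc)
  have aux4: "\<And>y0g P G F f0. G = P - F \<Longrightarrow> (y0g::'a) + (P - (F - f0)) = G + (y0g + f0)"
    by (simp add: algebra_simps)
  have r: "r * \<gamma> = y 0 * \<gamma> + ?f 0" unfolding r_def by (simp add: Dop_0 distrib_right)
  show "(\<Sum>s<Suc N. y s * Dop \<sigma> a s \<gamma>) = (\<Sum>s<N. z s * Dop \<sigma> a s (\<sigma> \<gamma> * a - u * \<gamma>)) + r * \<gamma>"
    unfolding h1 h2 shift r by (rule aux4[OF h3])
qed

lemma Dop_zero: "Dop \<sigma> a s 0 = 0"
  unfolding Dop_def by (simp add: sp_zero)

lemma core:
  "finite C \<Longrightarrow> card C = N \<Longrightarrow> (\<forall>k\<in>C. A k dvd 1) \<Longrightarrow>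
   (\<forall>k\<in>C. \<forall>k'\<in>C. A k \<noteq> A k' \<longrightarrow> (\<forall>b b'. b * b' = 1 \<longrightarrow> A k - \<sigma> b * A k' * b' \<notin> I)) \<Longrightarrow>
   indep_mod R I C A B \<Longrightarrow>
   (\<forall>k\<in>C. (\<Sum>s<N. y s * Dop \<sigma> (A k) s (B k)) \<in> I) \<Longrightarrow> \<forall>s<N. y s \<in> I"
proof (induction N arbitrary: C B y)
  case 0
  then show ?case by simp
next
  case (Suc N)
  note fin = Suc.prems(1) and cardC = Suc.prems(2) and units = Suc.prems(3)
    and tw = Suc.prems(4) and ind = Suc.prems(5) and ker = Suc.prems(6)
  from cardC fin obtain k0 where k0: "k0 \<in> C"
    by (metis card.empty ex_in_conv nat.simps(3))
  define \<beta> where "\<beta> = B k0"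
  define \<alpha>0 where "\<alpha>0 = A k0"
  have \<beta>I: "\<beta> \<notin> I"
  proof
    assume b: "\<beta> \<in> I"
    let ?c = "\<lambda>k. if k = k0 then 1 else (0::'a)"
    have "(\<Sum>k\<in>{k\<in>C. A k = \<alpha>0}. ?c k * B k) = (\<Sum>k\<in>{k\<in>C. A k = \<alpha>0}. if k = k0 then B k else 0)"
      by (rule sum.cong) auto
    also have "\<dots> = \<beta>" using fin k0 unfolding \<beta>_def \<alpha>0_def by (subst sum.delta) auto
    finally have "(\<Sum>k\<in>{k\<in>C. A k = \<alpha>0}. ?c k * B k) \<in> I" using b by simp
    moreover have "\<forall>k\<in>C. ?c k \<in> R" using R_0 R_1 by auto
    ultimately have "?c k0 \<in> I" using ind[unfolded indep_mod_def, rule_format, of ?c \<alpha>0 k0] k0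
      unfolding \<alpha>0_def by blast
    then show False using one_I by simp
  qed
  then obtain \<beta>' where \<beta>\<beta>': "\<beta> * \<beta>' = 1" using I_unit by (metis dvd_def)
  obtain a0' where a0: "\<alpha>0 * a0' = 1" using units k0 unfolding \<alpha>0_def by (metis dvd_def)
  define u where "u = \<sigma> \<beta> * \<alpha>0 * \<beta>'"
  define z where "z = (\<lambda>s. zz \<sigma> u y N (N - s))"
  define r where "r = y 0 + z 0 * u"
  have dec: "\<And>a \<gamma>. (\<Sum>s<Suc N. y s * Dop \<sigma> a s \<gamma>) = (\<Sum>s<N. z s * Dop \<sigma> a s (\<sigma> \<gamma> * a - u * \<gamma>)) + r * \<gamma>"
    unfolding z_def r_def by (rule division(1))
  have zN: "z N = 0" unfolding z_def by (rule division(2))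
  have yS: "\<And>s. s < N \<Longrightarrow> y (Suc s) = z s - z (Suc s) * (\<sigma>^^(Suc s)) u"
    unfolding z_def by (rule division(3))
  have y0: "y 0 = r - z 0 * u" unfolding r_def z_def by (rule division(4))
  have T\<beta>: "\<sigma> \<beta> * \<alpha>0 - u * \<beta> = 0"
  proof -
    have "u * \<beta> = \<sigma> \<beta> * \<alpha>0 * (\<beta> * \<beta>')" unfolding u_def by (simp add: ac_simps)
    then show ?thesis using \<beta>\<beta>' by simp
  qed
  have "(\<Sum>s<Suc N. y s * Dop \<sigma> \<alpha>0 s \<beta>) = r * \<beta>" using dec[of \<alpha>0 \<beta>] unfolding T\<beta> Dop_zero by simp
  then have "r * \<beta> \<in> I"
    using ker k0 unfolding \<alpha>0_def \<beta>_def by metis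
  then have rI: "r \<in> I" using I_mult[of "r * \<beta>" \<beta>'] \<beta>\<beta>' by (simp add: mult.assoc)
  define C' where "C' = C - {k0}"
  define B' where "B' = (\<lambda>k. \<sigma> (B k) * A k - u * B k)"
  have fin': "finite C'" using fin unfolding C'_def by simp
  have card': "card C' = N" using cardC k0 fin unfolding C'_def by simp
  have units': "\<forall>k\<in>C'. A k dvd 1" using units unfolding C'_def by simp
  have tw': "\<forall>k\<in>C'. \<forall>k'\<in>C'. A k \<noteq> A k' \<longrightarrow> (\<forall>b b'. b * b' = 1 \<longrightarrow> A k - \<sigma> b * A k' * b' \<notin> I)"
    using tw unfolding C'_def by simp
  have ker': "\<forall>k\<in>C'. (\<Sum>s<N. z s * Dop \<sigma> (A k) s (B' k)) \<in> I"
  proof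
    fix k assume k: "k \<in> C'"
    have "(\<Sum>s<N. z s * Dop \<sigma> (A k) s (B' k)) = (\<Sum>s<Suc N. y s * Dop \<sigma> (A k) s (B k)) - r * B k"
      using dec[of "A k" "B k"] unfolding B'_def by simp
    then show "(\<Sum>s<N. z s * Dop \<sigma> (A k) s (B' k)) \<in> I"
      using ker k rI I_diff I_mult unfolding C'_def by simp
  qed
  have ind': "indep_mod R I C' A B'"
    unfolding indep_mod_def
  proof (intro allI impI ballI)
    fix c \<alpha> k1
    assume cR: "\<forall>k\<in>C'. c k \<in> R"
      and sI: "(\<Sum>k\<in>{k\<in>C'. A k = \<alpha>}. c k * B' k) \<in> I"
      and k1: "k1 \<in> C'" and k1\<alpha>: "A k1 = \<alpha>"
    define K' where "K' = {k\<in>C'. A k = \<alpha>}"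
    define \<gamma> where "\<gamma> = (\<Sum>k\<in>K'. c k * B k)"
    have finK': "finite K'" using fin' unfolding K'_def by simp
    have "(\<Sum>k\<in>K'. c k * B' k) = (\<Sum>k\<in>K'. \<sigma> (c k * B k) * \<alpha> - u * (c k * B k))"
    proof (rule sum.cong)
      fix k assume "k \<in> K'"
      then have "\<sigma> (c k) = c k" "A k = \<alpha>" using cR s_R unfolding K'_def by auto
      then show "c k * B' k = \<sigma> (c k * B k) * \<alpha> - u * (c k * B k)"
        unfolding B'_def s_mult by (simp add: algebra_simps)
    qed simp
    also have "\<dots> = \<sigma> \<gamma> * \<alpha> - u * \<gamma>"
      unfolding \<gamma>_def s_sum[OF finK'] sum_subtractf sum_distrib_left sum_distrib_right by simp
    finally have T\<gamma>: "\<sigma> \<gamma> * \<alpha> - u * \<gamma> \<in> I" using sI unfolding K'_def by simp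
    show "c k1 \<in> I"
    proof (cases "\<alpha> = \<alpha>0")
      case False
      have \<gamma>I: "\<gamma> \<in> I"
      proof (rule ccontr)
        assume "\<gamma> \<notin> I"
        then obtain \<gamma>' where gg: "\<gamma> * \<gamma>' = 1" using I_unit by (metis dvd_def)
        have sgg: "\<sigma> \<gamma>' * \<sigma> \<gamma> = 1" using gg s_mult s_one by (metis mult.commute)
        have bb: "(\<gamma>' * \<beta>) * (\<beta>' * \<gamma>) = 1"
        proof -
          have "(\<gamma>' * \<beta>) * (\<beta>' * \<gamma>) = (\<gamma> * \<gamma>') * (\<beta> * \<beta>')" by (simp add: ac_simps)
          then show ?thesis using gg \<beta>\<beta>' by simp
        qed
        have "\<sigma> \<gamma>' * (\<sigma> \<gamma> * \<alpha> - u * \<gamma>) = (\<sigma> \<gamma>' * \<sigma> \<gamma>) * \<alpha> - \<sigma> (\<gamma>' * \<beta>) * \<alpha>0 * (\<beta>' * \<gamma>)"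
          unfolding u_def s_mult by (simp add: algebra_simps)
        also have "\<dots> = \<alpha> - \<sigma> (\<gamma>' * \<beta>) * \<alpha>0 * (\<beta>' * \<gamma>)" using sgg by simp
        finally have "\<alpha> - \<sigma> (\<gamma>' * \<beta>) * A k0 * (\<beta>' * \<gamma>) \<in> I"
          using I_multl[OF T\<gamma>] unfolding \<alpha>0_def by metis
        moreover have "k1 \<in> C" "A k1 \<noteq> A k0" using k1 k1\<alpha> False unfolding C'_def \<alpha>0_def by auto
        ultimately show False using tw k0 bb k1\<alpha> by blast
      qed
      let ?c = "\<lambda>k. if k = k0 then 0 else c k"
      have cls: "{k\<in>C. A k = \<alpha>} = K'" using False unfolding K'_def C'_def \<alpha>0_def by auto
      have "(\<Sum>k\<in>{k\<in>C. A k = \<alpha>}. ?c k * B k) = \<gamma>"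
        unfolding cls \<gamma>_def by (rule sum.cong) (auto simp: K'_def C'_def)
      moreover have "\<forall>k\<in>C. ?c k \<in> R" using cR R_0 unfolding C'_def by auto
      ultimately have "?c k1 \<in> I" using ind[unfolded indep_mod_def, rule_format, of ?c \<alpha> k1] \<gamma>I k1 k1\<alpha>
        unfolding C'_def by blast
      then show ?thesis using k1 unfolding C'_def by auto
    next
      case True
      define \<delta> where "\<delta> = \<beta>' * \<gamma>"
      have \<gamma>\<delta>: "\<gamma> = \<beta> * \<delta>" unfolding \<delta>_def using \<beta>\<beta>' by (simp add: mult.assoc[symmetric])
      have s\<beta>: "\<sigma> \<beta>' * \<sigma> \<beta> = 1" using \<beta>\<beta>' s_mult s_one by (metis mult.commute)
      have "\<sigma> \<beta>' * a0' * (\<sigma> \<gamma> * \<alpha>0 - u * \<gamma>) = (\<sigma> \<beta>' * \<sigma> \<beta>) * (\<alpha>0 * a0') * \<sigma> \<delta> - (\<sigma> \<beta>' * \<sigma> \<beta>) * (\<alpha>0 * a0') * (\<beta>' * \<beta>) * \<delta>"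
        unfolding u_def \<gamma>\<delta> s_mult by (simp add: algebra_simps)
      also have "\<dots> = \<sigma> \<delta> - \<delta>" using s\<beta> a0 \<beta>\<beta>' by (simp add: mult.commute)
      finally have "\<sigma> \<delta> - \<delta> \<in> I" using I_multl[OF T\<gamma>[unfolded True]] by metis
      then obtain c0 where c0: "c0 \<in> R" "\<delta> - c0 \<in> I" using kerprop by blast
      have "\<gamma> - c0 * \<beta> = \<beta> * (\<delta> - c0)" unfolding \<gamma>\<delta> by (simp add: algebra_simps)
      then have g0: "\<gamma> - c0 * \<beta> \<in> I" using I_multl[OF c0(2)] by simp
      let ?c = "\<lambda>k. if k = k0 then - c0 else c k"
      have cls: "{k\<in>C. A k = \<alpha>} = insert k0 K'" using True k0 unfolding K'_def C'_def \<alpha>0_def by auto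
      have "k0 \<notin> K'" unfolding K'_def C'_def by simp
      then have "(\<Sum>k\<in>{k\<in>C. A k = \<alpha>}. ?c k * B k) = - c0 * \<beta> + (\<Sum>k\<in>K'. ?c k * B k)"
        unfolding cls using finK' \<beta>_def by simp
      also have "(\<Sum>k\<in>K'. ?c k * B k) = \<gamma>"
        unfolding \<gamma>_def by (rule sum.cong) (auto simp: K'_def C'_def)
      finally have "(\<Sum>k\<in>{k\<in>C. A k = \<alpha>}. ?c k * B k) \<in> I" using g0 by simp
      moreover have "\<forall>k\<in>C. ?c k \<in> R" using cR c0 R_neg unfolding C'_def by auto
      ultimately have "?c k1 \<in> I" using ind[unfolded indep_mod_def, rule_format, of ?c \<alpha> k1] k1 k1\<alpha>
        unfolding C'_def by blast
      then show ?thesis using k1 unfolding C'_def by auto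
    qed
  qed
  have zI: "\<forall>s<N. z s \<in> I" using Suc.IH[OF fin' card' units' tw' ind' ker'] .
  have zI': "z s \<in> I" if "s \<le> N" for s
    using zI zN I_0 that by (cases "s = N") auto
  show ?case
  proof (intro allI impI)
    fix s assume s: "s < Suc N"
    show "y s \<in> I"
    proof (cases s)
      case 0
      then show ?thesis using y0 rI zI'[of 0] I_diff I_mult by simp
    next
      case (Suc s')
      then have "s' < N" using s by simp
      then show ?thesis using yS[of s'] zI'[of s'] zI'[of "Suc s'"] I_diff I_mult Suc by simp
    qed
  qed
qed

end



lemma reps_exist: "\<exists>B\<subseteq>A. inj_on f B \<and> f ` B = f ` A"
proof -
  define g where "g y = (SOME x. x \<in> A \<and> f x = y)" for y
  have g: "g y \<in> A \<and> f (g y) = y" if "y \<in> f ` A" for y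
    unfolding g_def by (rule someI_ex) (use that in auto)
  have "g ` f ` A \<subseteq> A" using g by blast
  moreover have "inj_on f (g ` f ` A)"
  proof (rule inj_onI)
    fix x y assume x: "x \<in> g ` f ` A" and y: "y \<in> g ` f ` A" and e: "f x = f y"
    from x obtain a where a: "a \<in> f ` A" "x = g a" by blast
    from y obtain b where b: "b \<in> f ` A" "y = g b" by blast
    have "a = b" using g[OF a(1)] g[OF b(1)] a(2) b(2) e by simp
    then show "x = y" using a b by simp
  qed
  moreover have "f ` g ` f ` A = f ` A"
  proof
    show "f ` g ` f ` A \<subseteq> f ` A" using g by blast
    show "f ` A \<subseteq> f ` g ` f ` A"
    proof
      fix y assume y: "y \<in> f ` A"
      then have "y = f (g y)" using g by simp
      then show "y \<in> f ` g ` f ` A" using y by blast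
    qed
  qed
  ultimately show ?thesis by blast
qed

lemma prod_cong_I:
  assumes I_add: "\<And>x y. x \<in> I \<Longrightarrow> y \<in> I \<Longrightarrow> x + y \<in> I"
    and I_mult: "\<And>x y. x \<in> I \<Longrightarrow> (x::'a::comm_ring_1) * y \<in> I" and I_0: "0 \<in> I"
  shows "(\<And>i. i \<in> S \<Longrightarrow> f i - g i \<in> I) \<Longrightarrow> prod f S - prod g S \<in> I"
proof (induction S rule: infinite_finite_induct)
  case (insert a F)
  have "prod f (insert a F) - prod g (insert a F) = (prod f F - prod g F) * f a + (f a - g a) * prod g F"
    using insert.hyps by (simp add: algebra_simps)
  then show ?case using insert I_add I_mult by simp
qed (auto simp: I_0)

locale gs =
  fixes R :: "'a::comm_ring_1 set" and h :: "'a poly" and \<theta> :: 'a and \<sigma> :: "'a \<Rightarrow> 'a"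
  assumes setting: "galois_setting R h \<theta> \<sigma>"
begin

abbreviation "mR \<equiv> max_ideal R"

lemma aut: "ring_aut \<sigma>" and sR: "\<And>r. r \<in> R \<Longrightarrow> \<sigma> r = r"
  using setting unfolding galois_setting_def galois_group_def by auto

lemma s_add: "\<sigma> (x + y) = \<sigma> x + \<sigma> y" and s_mult: "\<sigma> (x * y) = \<sigma> x * \<sigma> y" and s_one: "\<sigma> 1 = 1"
  and s_bij: "bij \<sigma>"
  using aut unfolding ring_aut_def by auto

lemma subR: "subring R" and finR: "finite R" and zero_one: "(0::'a) \<noteq> 1"
  and chain: "\<And>I J. ideal_of R I \<Longrightarrow> ideal_of R J \<Longrightarrow> I \<subseteq> J \<or> J \<subseteq> I"
  using setting unfolding galois_setting_def finite_chain_ring_def by auto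

lemma R0: "0 \<in> R" and R1: "1 \<in> R" and Radd: "\<And>x y. x \<in> R \<Longrightarrow> y \<in> R \<Longrightarrow> x + y \<in> R"
  and Rdiff: "\<And>x y. x \<in> R \<Longrightarrow> y \<in> R \<Longrightarrow> x - y \<in> R"
  and Rmult: "\<And>x y. x \<in> R \<Longrightarrow> y \<in> R \<Longrightarrow> x * y \<in> R"
  using subR unfolding subring_def by auto

lemma Rneg: "x \<in> R \<Longrightarrow> - x \<in> R"
  using Rdiff[OF R0] by fastforce

lemma Rpow: "x \<in> R \<Longrightarrow> x ^ k \<in> R"
  by (induction k) (auto simp: R1 Rmult)

lemma Rsum: "(\<And>i. i \<in> S \<Longrightarrow> f i \<in> R) \<Longrightarrow> sum f S \<in> R"
  by (induction S rule: infinite_finite_induct) (auto simp: R0 Radd)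

lemma mR_sub: "mR \<subseteq> R" unfolding max_ideal_def by auto

lemma notin_mR: "x \<in> R \<Longrightarrow> x \<notin> mR \<Longrightarrow> \<exists>u\<in>R. x * u = 1"
  unfolding max_ideal_def by auto

lemma in_mR: "x \<in> R \<Longrightarrow> \<not> (\<exists>u\<in>R. x * u = 1) \<Longrightarrow> x \<in> mR"
  unfolding max_ideal_def by auto

lemma zero_mR: "0 \<in> mR" using R0 zero_one in_mR by auto

definition pid :: "'a \<Rightarrow> 'a set" where "pid x = (\<lambda>r. x * r) ` R"

lemma pid_ideal:
  assumes x: "x \<in> R"
  shows "ideal_of R (pid x)"
proof -
  have 1: "pid x \<subseteq> R" unfolding pid_def using x Rmult by auto
  have 2: "0 \<in> pid x" unfolding pid_def using R0 by (auto intro: image_eqI[of _ _ 0])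
  have 3: "u + v \<in> pid x \<and> u - v \<in> pid x" if "u \<in> pid x" "v \<in> pid x" for u v
  proof -
    from that obtain a b where ab: "a \<in> R" "b \<in> R" "u = x * a" "v = x * b" unfolding pid_def by auto
    have "u + v = x * (a + b)" "u - v = x * (a - b)" using ab by (simp_all add: algebra_simps)
    then show ?thesis unfolding pid_def using ab(1,2) Radd Rdiff by auto
  qed
  have 4: "r * u \<in> pid x" if "r \<in> R" "u \<in> pid x" for r u
  proof -
    from that obtain a where a: "a \<in> R" "u = x * a" unfolding pid_def by auto
    have "r * u = x * (r * a)" using a by (simp add: algebra_simps)
    then show ?thesis unfolding pid_def using a that(1) Rmult by (intro image_eqI[of _ _ "r * a"]) auto
  qed
  show ?thesis unfolding ideal_of_def using 1 2 3 4 by blast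
qed

lemma finite_pid: "finite (pid x)" unfolding pid_def using finR by simp

lemma pi_exists: "\<exists>\<pi>. \<pi> \<in> mR \<and> (\<forall>x\<in>mR. \<exists>r\<in>R. x = \<pi> * r)"
proof -
  have fin: "finite mR" using finR mR_sub finite_subset by blast
  have ne: "mR \<noteq> {}" using zero_mR by blast
  let ?M = "Max ((\<lambda>x. card (pid x)) ` mR)"
  have mx: "\<forall>x\<in>mR. card (pid x) \<le> ?M" using fin by auto
  have "?M \<in> (\<lambda>x. card (pid x)) ` mR" using fin ne by (intro Max_in) auto
  then obtain \<pi> where \<pi>: "\<pi> \<in> mR" and "card (pid \<pi>) = ?M" by auto
  with mx have mx: "\<forall>x\<in>mR. card (pid x) \<le> card (pid \<pi>)" by simp
  have "\<exists>r\<in>R. x = \<pi> * r" if x: "x \<in> mR" for x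
  proof -
    have xR: "x \<in> R" and \<pi>R: "\<pi> \<in> R" using x \<pi> mR_sub by auto
    have "pid x \<subseteq> pid \<pi>"
    proof (cases "pid x \<subseteq> pid \<pi>")
      case False
      then have "pid \<pi> \<subseteq> pid x" using chain[OF pid_ideal[OF xR] pid_ideal[OF \<pi>R]] by blast
      moreover have "card (pid x) \<le> card (pid \<pi>)" using mx x by blast
      ultimately have "pid \<pi> = pid x" using finite_pid[of x] card_subset_eq[of "pid x" "pid \<pi>"] card_mono[of "pid x" "pid \<pi>"]
        by simp
      then show ?thesis by simp
    qed simp
    moreover have "x \<in> pid x" unfolding pid_def using R1 by (auto intro: image_eqI[of _ _ 1])
    ultimately show ?thesis unfolding pid_def by auto
  qed
  then show ?thesis using \<pi> by blast
qed

definition pi0 where "pi0 = (SOME \<pi>. \<pi> \<in> mR \<and> (\<forall>x\<in>mR. \<exists>r\<in>R. x = \<pi> * r))"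

lemma pi0: "pi0 \<in> mR" "\<And>x. x \<in> mR \<Longrightarrow> \<exists>r\<in>R. x = pi0 * r"
  using someI_ex[OF pi_exists] unfolding pi0_def by blast+

lemma pi0R: "pi0 \<in> R" using pi0 mR_sub by auto

lemma pi_times_mR: "r \<in> R \<Longrightarrow> pi0 * r \<in> mR"
proof (rule ccontr)
  assume r: "r \<in> R" and "pi0 * r \<notin> mR"
  then obtain u where "u \<in> R" "pi0 * r * u = 1" using notin_mR Rmult pi0R by blast
  then have "pi0 * (r * u) = 1" "r * u \<in> R" using Rmult r by (simp_all add: mult.assoc)
  then have "\<exists>v\<in>R. pi0 * v = 1" by blast
  then show False using pi0(1) unfolding max_ideal_def by auto
qed

lemma mR_add: "x \<in> mR \<Longrightarrow> y \<in> mR \<Longrightarrow> x + y \<in> mR"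
proof -
  assume "x \<in> mR" "y \<in> mR"
  then obtain a b where "a \<in> R" "b \<in> R" "x = pi0 * a" "y = pi0 * b" using pi0(2) by blast
  then have "x + y = pi0 * (a + b)" "a + b \<in> R" using Radd by (simp_all add: distrib_left)
  then show ?thesis using pi_times_mR by simp
qed

lemma mR_diff: "x \<in> mR \<Longrightarrow> y \<in> mR \<Longrightarrow> x - y \<in> mR"
proof -
  assume "x \<in> mR" "y \<in> mR"
  then obtain a b where "a \<in> R" "b \<in> R" "x = pi0 * a" "y = pi0 * b" using pi0(2) by blast
  then have "x - y = pi0 * (a - b)" "a - b \<in> R" using Rdiff by (simp_all add: right_diff_distrib)
  then show ?thesis using pi_times_mR by simp
qed

lemma one_notin_mR: "1 \<notin> mR" unfolding max_ideal_def using R1 by auto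

lemma pi_nilp: "\<exists>t. pi0 ^ t = 0"
proof -
  have "\<not> inj_on (\<lambda>k. pi0 ^ k) (UNIV :: nat set)"
  proof
    assume "inj_on (\<lambda>k. pi0 ^ k) (UNIV :: nat set)"
    moreover have "(\<lambda>k. pi0 ^ k) ` UNIV \<subseteq> R" using Rpow pi0R by auto
    ultimately have "finite (UNIV :: nat set)" using inj_on_finite finR by blast
    then show False by simp
  qed
  then obtain i j :: nat where ij0: "pi0 ^ i = pi0 ^ j" "i \<noteq> j"
    unfolding inj_on_def by blast
  have "\<exists>i j. pi0 ^ i = pi0 ^ j \<and> (i::nat) < j"
  proof (cases "i < j")
    case True
    with ij0 show ?thesis by blast
  next
    case False
    with ij0(2) have "j < i" by simp
    with ij0(1) show ?thesis by (intro exI[of _ j] exI[of _ i]) simp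
  qed
  then obtain i j :: nat where ij: "pi0 ^ i = pi0 ^ j" "i < j" by blast
  define d where "d = j - i"
  have d: "d > 0" "j = i + d" using ij unfolding d_def by auto
  have "1 - pi0 ^ d \<notin> mR"
  proof
    assume "1 - pi0 ^ d \<in> mR"
    moreover have "pi0 ^ d \<in> mR"
    proof -
      have "pi0 ^ d = pi0 * pi0 ^ (d - 1)" using d(1) by (cases d) auto
      then show ?thesis using pi_times_mR Rpow pi0R by simp
    qed
    ultimately have "1 - pi0 ^ d + pi0 ^ d \<in> mR" by (rule mR_add)
    then show False using one_notin_mR by simp
  qed
  then obtain v where v: "(1 - pi0 ^ d) * v = 1" using notin_mR Rdiff R1 Rpow pi0R by blast
  have "pi0 ^ i * (1 - pi0 ^ d) = 0" using ij(1) d by (simp add: algebra_simps power_add)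
  then have "pi0 ^ i * (1 - pi0 ^ d) * v = 0" by simp
  then have "pi0 ^ i = 0" using v by (simp add: mult.assoc)
  then show ?thesis by blast
qed

definition tt where "tt = (LEAST t. pi0 ^ t = 0)"

lemma tt: "pi0 ^ tt = 0" "tt > 0" "\<And>t. t < tt \<Longrightarrow> pi0 ^ t \<noteq> 0"
proof -
  show "pi0 ^ tt = 0" unfolding tt_def using pi_nilp by (rule LeastI_ex)
  show "\<And>t. t < tt \<Longrightarrow> pi0 ^ t \<noteq> 0" unfolding tt_def using not_less_Least by blast
  show "tt > 0" using \<open>pi0 ^ tt = 0\<close> zero_one by (cases tt) auto
qed

definition II where "II = range (\<lambda>s. pi0 * s)"

lemma II_pi: "pi0 * z \<in> II" unfolding II_def by simp

lemma II_E: "x \<in> II \<Longrightarrow> \<exists>s. x = pi0 * s" unfolding II_def by auto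

lemma II_0: "0 \<in> II" using II_pi[of 0] by simp

lemma II_add: "x \<in> II \<Longrightarrow> y \<in> II \<Longrightarrow> x + y \<in> II"
proof -
  assume "x \<in> II" "y \<in> II"
  then obtain a b where "x = pi0 * a" "y = pi0 * b" using II_E by blast
  then have "x + y = pi0 * (a + b)" by (simp add: distrib_left)
  then show ?thesis using II_pi by simp
qed

lemma II_diff: "x \<in> II \<Longrightarrow> y \<in> II \<Longrightarrow> x - y \<in> II"
proof -
  assume "x \<in> II" "y \<in> II"
  then obtain a b where "x = pi0 * a" "y = pi0 * b" using II_E by blast
  then have "x - y = pi0 * (a - b)" by (simp add: right_diff_distrib)
  then show ?thesis using II_pi by simp
qed

lemma II_mult: "x \<in> II \<Longrightarrow> x * y \<in> II"
proof -
  assume "x \<in> II"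
  then obtain a where "x = pi0 * a" using II_E by blast
  then have "x * y = pi0 * (a * y)" by (simp add: mult.assoc)
  then show ?thesis using II_pi by simp
qed

lemma II_neg: "x \<in> II \<Longrightarrow> - x \<in> II"
  using II_diff[OF II_0] by simp

lemma II_multl: "x \<in> II \<Longrightarrow> y * x \<in> II" using II_mult[of x y] by (simp add: mult.commute)

lemma II_sum: "(\<And>i. i \<in> S \<Longrightarrow> f i \<in> II) \<Longrightarrow> sum f S \<in> II"
  by (induction S rule: infinite_finite_induct) (auto simp: II_0 II_add)

lemma II_nilp: "x \<in> II \<Longrightarrow> x ^ tt = 0"
proof -
  assume "x \<in> II"
  then obtain a where "x = pi0 * a" using II_E by blast
  then show ?thesis using tt(1) by (simp add: power_mult_distrib)
qed

lemma one_II: "1 \<notin> II"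
proof
  assume "1 \<in> II"
  then have "(1::'a) ^ tt = 0" using II_nilp by blast
  then show False using zero_one by simp
qed

lemma one_plus_II: "e \<in> II \<Longrightarrow> (1 - e) dvd 1"
proof -
  assume e: "e \<in> II"
  have "1 - e ^ tt = (1 - e) * (\<Sum>i<tt. e ^ i)"
    using power_diff_1_eq[of e tt] by (simp add: algebra_simps)
  then have "1 = (1 - e) * (\<Sum>i<tt. e ^ i)" using II_nilp[OF e] by simp
  then show ?thesis by (rule dvdI)
qed

lemma mR_II: "x \<in> mR \<Longrightarrow> x \<in> II"
  using pi0(2) II_pi by blast

lemma R_II_mR: "x \<in> R \<Longrightarrow> x \<in> II \<Longrightarrow> x \<in> mR"
proof (rule ccontr)
  assume "x \<in> R" "x \<in> II" "x \<notin> mR"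
  then obtain u where "x * u = 1" "x \<in> II" using notin_mR by blast
  then have "x * u \<in> II" using II_mult by blast
  then show False using \<open>x * u = 1\<close> one_II by simp
qed

lemma ext_II: "ext_ideal mR \<subseteq> II"
proof
  fix x assume "x \<in> ext_ideal mR"
  then have "\<exists>(k::nat) f g. (\<forall>i<k. f i \<in> mR) \<and> x = (\<Sum>i<k. f i * g i)" by (simp add: ext_ideal_def)
  then obtain k :: nat and f g where fg: "\<forall>i<k. f i \<in> mR" "x = (\<Sum>i<k. f i * g i)" by blast
  show "x \<in> II" unfolding fg(2) by (rule II_sum) (use fg(1) mR_II II_mult in auto)
qed

lemma frob: "\<sigma> y - y ^ residue_card R \<in> II"
  using setting ext_II unfolding galois_setting_def by blast

end


context gs
begin

lemma pres: "presentation R h \<theta>" and irr: "irreducible_mod R h"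
  using setting unfolding galois_setting_def by auto

lemma deg_h: "degree h \<ge> 1" using irr unfolding irreducible_mod_def by simp

definition Rp :: "'a poly \<Rightarrow> bool" where "Rp p \<longleftrightarrow> (\<forall>i. coeff p i \<in> R)"

lemma Rp_h: "Rp h" and lc_h: "lead_coeff h = 1" and h_\<theta>: "poly h \<theta> = 0"
  using pres unfolding presentation_def Rp_def by auto

lemma repr: "\<exists>p. Rp p \<and> degree p < degree h \<and> poly p \<theta> = y"
proof -
  obtain c where c: "\<forall>i. c i \<in> R" "\<forall>i\<ge>degree h. c i = 0" "y = (\<Sum>i<degree h. c i * \<theta> ^ i)"
    using pres unfolding presentation_def by blast
  define p where "p = (\<Sum>i<degree h. monom (c i) i)"
  have cp: "coeff p j = c j" for j
  proof -
    have "coeff p j = (\<Sum>i<degree h. if i = j then c i else 0)"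
      unfolding p_def coeff_sum coeff_monom by simp
    also have "\<dots> = (if j < degree h then c j else 0)" by (simp add: sum.delta')
    finally show ?thesis using c(2) by (cases "j < degree h") auto
  qed
  have "degree p \<le> degree h - 1" by (rule degree_le) (use cp c(2) in auto)
  then have "degree p < degree h" using deg_h by simp
  moreover have "poly p \<theta> = y" unfolding p_def c(3) poly_sum poly_monom by simp
  moreover have "Rp p" unfolding Rp_def cp using c(1) by simp
  ultimately show ?thesis by blast
qed

lemma finite_UNIV: "finite (UNIV :: 'a set)"
proof -
  let ?F = "{c. \<forall>i. (i \<in> {..<degree h} \<longrightarrow> c i \<in> R) \<and> (i \<notin> {..<degree h} \<longrightarrow> c i = 0)}"
  have fin: "finite ?F" by (rule finite_set_of_finite_funs) (use finR in auto)
  have "UNIV \<subseteq> (\<lambda>c. \<Sum>i<degree h. c i * \<theta> ^ i) ` ?F"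
  proof
    fix y :: 'a
    obtain c where c: "\<forall>i. c i \<in> R" "\<forall>i\<ge>degree h. c i = 0" "y = (\<Sum>i<degree h. c i * \<theta> ^ i)"
      using pres unfolding presentation_def by blast
    then have "c \<in> ?F" by auto
    then show "y \<in> (\<lambda>c. \<Sum>i<degree h. c i * \<theta> ^ i) ` ?F" using c(3) by blast
  qed
  then show ?thesis using fin finite_subset by blast
qed

lemma Rp_add: "Rp p \<Longrightarrow> Rp q \<Longrightarrow> Rp (p + q)" unfolding Rp_def by (simp add: Radd)
lemma Rp_diff: "Rp p \<Longrightarrow> Rp q \<Longrightarrow> Rp (p - q)" unfolding Rp_def by (simp add: Rdiff)
lemma Rp_mult: "Rp p \<Longrightarrow> Rp q \<Longrightarrow> Rp (p * q)" unfolding Rp_def coeff_mult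
  by (auto intro!: Rsum Rmult)
lemma Rp_smult: "c \<in> R \<Longrightarrow> Rp p \<Longrightarrow> Rp (Polynomial.smult c p)" unfolding Rp_def by (simp add: Rmult)
lemma Rp_monom: "c \<in> R \<Longrightarrow> Rp (monom c n)" unfolding Rp_def coeff_monom using R0 by simp
lemma Rp_0: "Rp 0" unfolding Rp_def using R0 by simp

lemma poly_mR: "(\<And>i. coeff p i \<in> mR) \<Longrightarrow> poly p \<theta> \<in> II"
  unfolding poly_altdef by (rule II_sum) (use mR_II II_mult in blast)

lemma rdiv:
  assumes f: "Rp f" "lead_coeff f = 1"
  shows "Rp p \<Longrightarrow> \<exists>q r. Rp q \<and> Rp r \<and> p = f * q + r \<and> (r = 0 \<or> degree r < degree f)"
proof (induction "degree p" arbitrary: p rule: less_induct)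
  case less
  show ?case
  proof (cases "degree p < degree f")
    case True
    then show ?thesis using less.prems Rp_0 by (intro exI[of _ 0] exI[of _ p]) auto
  next
    case False
    define c where "c = lead_coeff p"
    define e where "e = degree p - degree f"
    define p' where "p' = p - monom c e * f"
    have cR: "c \<in> R" using less.prems unfolding Rp_def c_def by simp
    have Rp': "Rp p'" unfolding p'_def using less.prems f(1) Rp_mult Rp_monom cR Rp_diff by simp
    have z: "coeff p' i = 0" if "i \<ge> degree p" for i
    proof (cases "i = degree p")
      case True
      then have "i - e = degree f" "\<not> i < e" using False unfolding e_def by auto
      then show ?thesis unfolding p'_def coeff_diff coeff_monom_mult using f(2) True c_def by simp
    next
      case False2: False
      then have "i > degree p" using that by simp
      then have "coeff p i = 0" "i - e > degree f" "\<not> i < e" using False unfolding e_def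
        by (auto simp: coeff_eq_0)
      then show ?thesis unfolding p'_def coeff_diff coeff_monom_mult by (simp add: coeff_eq_0)
    qed
    show ?thesis
    proof (cases "p' = 0")
      case True
      then have "p = f * monom c e + 0" unfolding p'_def by (simp add: mult.commute)
      then show ?thesis using Rp_monom[OF cR] Rp_0 by blast
    next
      case False3: False
      have "degree p' < degree p"
      proof (cases "degree p = 0")
        case True
        then have "p' = 0" using z by (intro poly_eqI) simp
        then show ?thesis using False3 by simp
      next
        case False
        have "degree p' \<le> degree p - 1" by (rule degree_le) (use z in auto)
        then show ?thesis using False by simp
      qed
      then obtain q r where qr: "Rp q" "Rp r" "p' = f * q + r" "r = 0 \<or> degree r < degree f"
        using less.hyps Rp' by blast
      have "p = f * (q + monom c e) + r" using qr(3) unfolding p'_def by (simp add: algebra_simps)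
      then show ?thesis using qr Rp_add Rp_monom[OF cR] by blast
    qed
  qed
qed

definition AA where "AA z = {p. Rp p \<and> poly p \<theta> * z \<in> II}"

lemma reduce:
  assumes p: "p \<in> AA z" and k0: "coeff p k0 \<notin> mR"
  shows "\<exists>g\<in>AA z. lead_coeff g = 1 \<and> (\<exists>k. coeff p k \<notin> mR \<and> degree g = k)"
proof -
  let ?K = "{i. coeff p i \<notin> mR}"
  have Ksub: "?K \<subseteq> {..degree p}"
  proof
    fix i assume "i \<in> ?K"
    then have "coeff p i \<noteq> 0" using zero_mR by auto
    then show "i \<in> {..degree p}" using le_degree by auto
  qed
  have finK: "finite ?K" using Ksub finite_subset by blast
  define k where "k = Max ?K"
  have kK: "k \<in> ?K" unfolding k_def using finK k0 by (intro Max_in) auto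
  have above: "coeff p i \<in> mR" if "i > k" for i
    using that finK unfolding k_def by (metis (mono_tags, lifting) Max_ge leD mem_Collect_eq)
  have pR: "Rp p" and pz: "poly p \<theta> * z \<in> II" using p unfolding AA_def by auto
  define p' where "p' = poly_cutoff (Suc k) p"
  have "\<And>i. coeff (p - p') i \<in> mR"
    unfolding p'_def coeff_diff coeff_poly_cutoff using above zero_mR by auto
  then have "poly (p - p') \<theta> \<in> II" by (rule poly_mR)
  then have "poly (p - p') \<theta> * z \<in> II" by (rule II_mult)
  then have "poly p \<theta> * z - poly (p - p') \<theta> * z \<in> II" using II_diff[OF pz] by blast
  moreover have "poly p \<theta> * z - poly (p - p') \<theta> * z = poly p' \<theta> * z" by (simp add: algebra_simps)
  ultimately have p'z: "poly p' \<theta> * z \<in> II" by simp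
  have ckR: "coeff p k \<in> R" using pR unfolding Rp_def by simp
  then obtain v where v: "v \<in> R" "coeff p k * v = 1" using notin_mR kK by blast
  define g where "g = Polynomial.smult v p'"
  have cg: "coeff g i = (if i < Suc k then v * coeff p i else 0)" for i
    unfolding g_def p'_def by (simp add: coeff_poly_cutoff)
  have "degree g \<le> k" by (rule degree_le) (simp add: cg)
  moreover have "coeff g k = 1" using cg v by (simp add: mult.commute)
  ultimately have dg: "degree g = k" using le_degree[of g k] zero_one by fastforce
  have "lead_coeff g = 1" using dg \<open>coeff g k = 1\<close> by simp
  moreover have "g \<in> AA z"
  proof -
    have "Rp g" unfolding Rp_def cg using v pR R0 Rmult unfolding Rp_def by simp
    moreover have "poly g \<theta> * z = v * (poly p' \<theta> * z)" unfolding g_def by simp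
    then have "poly g \<theta> * z \<in> II" using II_multl[OF p'z] by simp
    ultimately show ?thesis unfolding AA_def by simp
  qed
  ultimately show ?thesis using kK dg by blast
qed

lemma dom: assumes yz: "y * z \<in> II" and z: "z \<notin> II" shows "y \<in> II"
proof (rule ccontr)
  assume y: "y \<notin> II"
  obtain p where p: "Rp p" "degree p < degree h" "poly p \<theta> = y" using repr by blast
  have pA: "p \<in> AA z" using p yz unfolding AA_def by simp
  have "\<exists>i. coeff p i \<notin> mR"
  proof (rule ccontr)
    assume "\<not> (\<exists>i. coeff p i \<notin> mR)"
    then have "poly p \<theta> \<in> II" using poly_mR by blast
    then show False using p y by simp
  qed
  then obtain g0 where g0: "g0 \<in> AA z" "lead_coeff g0 = 1" "degree g0 \<le> degree p"
    using reduce[OF pA] by (metis le_degree zero_mR)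
  obtain f where f: "f \<in> AA z" "lead_coeff f = 1"
    and fmin: "\<And>g. g \<in> AA z \<Longrightarrow> lead_coeff g = 1 \<Longrightarrow> degree f \<le> degree g"
    using ex_has_least_nat[of "\<lambda>g. g \<in> AA z \<and> lead_coeff g = 1" g0 degree] g0 by blast
  have fR: "Rp f" and fz: "poly f \<theta> * z \<in> II" using f unfolding AA_def by auto
  have df: "degree f < degree h" using fmin[OF g0(1,2)] g0(3) p(2) by simp
  have df1: "degree f \<ge> 1"
  proof (rule ccontr)
    assume "\<not> degree f \<ge> 1"
    then have "degree f = 0" by simp
    then have "f = [:1:]" using f(2) by (metis leading_coeff_0_iff pCons_0_0 degree_eq_zeroE coeff_pCons_0)
    then show False using fz z by simp
  qed
  obtain q r where qr: "Rp q" "Rp r" "h = f * q + r" "r = 0 \<or> degree r < degree f"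
    using rdiv[OF fR f(2) Rp_h] by blast
  have rA: "r \<in> AA z"
  proof -
    have "poly r \<theta> = - (poly f \<theta> * poly q \<theta>)" using qr(3) h_\<theta>
      by (metis add_eq_0_iff poly_add poly_mult)
    then have "poly r \<theta> * z = - ((poly f \<theta> * z) * poly q \<theta>)" by (simp add: algebra_simps)
    then have "poly r \<theta> * z \<in> II" using II_neg[OF II_mult[OF fz]] by simp
    then show ?thesis using qr(2) unfolding AA_def by simp
  qed
  have rm: "\<forall>i. coeff r i \<in> mR"
  proof (rule ccontr)
    assume "\<not> (\<forall>i. coeff r i \<in> mR)"
    then obtain i where "coeff r i \<notin> mR" by blast
    from reduce[OF rA this] obtain g k where g: "g \<in> AA z" "lead_coeff g = 1" "coeff r k \<notin> mR" "degree g = k"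
      by blast
    have "coeff r k \<noteq> 0" using g(3) zero_mR by auto
    then have "r \<noteq> 0" "k \<le> degree r" using le_degree by auto
    then have "degree g < degree f" using qr(4) g(4) by simp
    then show False using fmin[OF g(1,2)] by simp
  qed
  have q0: "q \<noteq> 0"
  proof
    assume "q = 0"
    then have "h = r" using qr(3) by simp
    then show False using qr(4) df lc_h by auto
  qed
  have cfq: "coeff (f * q) (degree f + degree q) = lead_coeff q"
    using coeff_mult_degree_sum[of f q] f(2) by simp
  have lq0: "lead_coeff q \<noteq> 0" using q0 by simp
  have dfq: "degree (f * q) = degree f + degree q"
    using degree_mult_le[of f q] le_degree[of "f * q" "degree f + degree q"] cfq lq0 by simp
  have "r = 0 \<or> degree r < degree (f * q)" using qr(4) dfq by auto
  then have dh: "degree h = degree (f * q)" and ch: "lead_coeff h = coeff (f * q) (degree (f * q))"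
    using qr(3) by (auto simp: degree_add_eq_left coeff_eq_0)
  have lq: "lead_coeff q = 1" using ch lc_h dfq cfq by simp
  have dq: "degree q \<ge> 1" using dh dfq df by simp
  have "\<exists>f g. (\<forall>i. coeff f i \<in> R) \<and> (\<forall>i. coeff g i \<in> R) \<and>
          lead_coeff f = 1 \<and> lead_coeff g = 1 \<and> degree f \<ge> 1 \<and> degree g \<ge> 1 \<and>
          (\<forall>i. coeff (h - f * g) i \<in> mR)"
    using fR qr(1) f(2) lq df1 dq rm qr(3) unfolding Rp_def by (intro exI[of _ f] exI[of _ q]) simp
  then show False using irr unfolding irreducible_mod_def by blast
qed

end


context gs
begin

lemma pow_notin: "y \<notin> II \<Longrightarrow> y ^ k \<notin> II"
proof (induction k)
  case 0
  then show ?case using one_II by simp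
next
  case (Suc k)
  then show ?case using dom[of y "y ^ k"] by auto
qed

end


context gs
begin

lemma unit: assumes y: "y \<notin> II" shows "y dvd 1"
proof -
  have "\<not> inj_on (\<lambda>k. y ^ k) (UNIV :: nat set)"
  proof
    assume "inj_on (\<lambda>k. y ^ k) (UNIV :: nat set)"
    then have "finite (UNIV :: nat set)" using inj_on_finite finite_UNIV by blast
    then show False by simp
  qed
  then obtain i j :: nat where ij0: "y ^ i = y ^ j" "i \<noteq> j" unfolding inj_on_def by blast
  have "\<exists>i j. y ^ i = y ^ j \<and> (i::nat) < j"
  proof (cases "i < j")
    case True
    with ij0 show ?thesis by blast
  next
    case False
    with ij0(2) have "j < i" by simp
    with ij0(1) show ?thesis by (intro exI[of _ j] exI[of _ i]) simp
  qed
  then obtain i j :: nat where ij: "y ^ i = y ^ j" "i < j" by blast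
  define d where "d = j - i"
  have d: "d > 0" "j = i + d" using ij unfolding d_def by auto
  have "(1 - y ^ d) * y ^ i = 0" using ij(1) d by (simp add: algebra_simps power_add)
  then have "(1 - y ^ d) * y ^ i \<in> II" using II_0 by simp
  then have e: "1 - y ^ d \<in> II" using dom pow_notin[OF y] by blast
  have "(1 - (1 - y ^ d)) dvd 1" by (rule one_plus_II[OF e])
  then have "y ^ d dvd 1" by simp
  moreover have "y dvd y ^ d" using d(1) by (simp add: dvd_power)
  ultimately show ?thesis using dvd_trans by blast
qed

lemma root_bound:
  "lead_coeff p = 1 \<Longrightarrow> degree p = n \<Longrightarrow> finite Z \<Longrightarrow> (\<forall>x\<in>Z. \<forall>y\<in>Z. x \<noteq> y \<longrightarrow> x - y \<notin> II) \<Longrightarrow>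
   (\<forall>x\<in>Z. poly p x \<in> II) \<Longrightarrow> card Z \<le> n"
proof (induction n arbitrary: p Z)
  case 0
  then have "p = [:1:]" by (metis leading_coeff_0_iff pCons_0_0 degree_eq_zeroE coeff_pCons_0)
  then have "Z = {}" using 0 one_II by auto
  then show ?case by simp
next
  case (Suc n)
  show ?case
  proof (cases "Z = {}")
    case True
    then show ?thesis by simp
  next
    case False
    then obtain z0 where z0: "z0 \<in> Z" by blast
    define Q where "Q = synthetic_div p z0"
    have pQ: "p = [:- z0, 1:] * Q + [:poly p z0:]" unfolding Q_def by (rule synthetic_div_correct'[symmetric])
    have dQ: "degree Q = n" unfolding Q_def degree_synthetic_div using Suc.prems(2) by simp
    have "coeff p (Suc n) = coeff Q n"
    proof -
      have "coeff p (Suc n) = coeff ([:- z0, 1:] * Q) (Suc n) + coeff [:poly p z0:] (Suc n)"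
        by (subst pQ) (simp only: coeff_add)
      then have "coeff p (Suc n) = coeff ([:- z0, 1:] * Q) (Suc n)" by simp
      also have "\<dots> = - z0 * coeff Q (Suc n) + coeff Q n" by (simp add: mult_pCons_left)
      also have "coeff Q (Suc n) = 0" using dQ by (simp add: coeff_eq_0)
      finally show ?thesis by simp
    qed
    then have lQ: "lead_coeff Q = 1" using Suc.prems(1,2) dQ by simp
    let ?Z = "Z - {z0}"
    have roots: "\<forall>x\<in>?Z. poly Q x \<in> II"
    proof
      fix x assume x: "x \<in> ?Z"
      have "poly p x = (x - z0) * poly Q x + poly p z0"
        by (subst pQ) (simp add: algebra_simps)
      then have "(x - z0) * poly Q x = poly p x - poly p z0" by simp
      then have "(x - z0) * poly Q x \<in> II" using II_diff Suc.prems(5) x z0 by simp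
      moreover have "x - z0 \<notin> II" using Suc.prems(4) x z0 by auto
      ultimately show "poly Q x \<in> II" using dom[of "poly Q x" "x - z0"] by (simp add: mult.commute)
    qed
    have "card ?Z \<le> n" using Suc.IH[OF lQ dQ _ _ roots] Suc.prems(3,4) by auto
    then show ?thesis using z0 Suc.prems(3) by (simp add: card_Diff_singleton_if)
  qed
qed

lemma kerprop: assumes d: "\<sigma> \<delta> - \<delta> \<in> II" shows "\<exists>c\<in>R. \<delta> - c \<in> II"
proof (rule ccontr)
  assume nc: "\<not> (\<exists>c\<in>R. \<delta> - c \<in> II)"
  define q where "q = residue_card R"
  define F where "F r = (\<lambda>x. r + x) ` mR" for r
  have q: "q = card (F ` R)" unfolding q_def residue_card_def F_def by simp
  obtain Rep where Rep: "Rep \<subseteq> R" "inj_on F Rep" "F ` Rep = F ` R" using reps_exist[where A=R and f=F] by blast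
  have cardRep: "card Rep = q" using q Rep(3) card_image[OF Rep(2)] by simp
  have finRep: "finite Rep" using Rep(1) finR finite_subset by blast
  have Fdiff: "x - y \<in> mR" if "F x = F y" for x y
  proof -
    have "x \<in> F x" unfolding F_def using zero_mR by (auto intro: image_eqI[of _ _ 0])
    then have "x \<in> F y" using that by simp
    then obtain m0 where "m0 \<in> mR" "x = y + m0" unfolding F_def by blast
    then show ?thesis by simp
  qed
  have Fcong: "F x = F y" if m: "x - y \<in> mR" for x y
  proof -
    have "(\<lambda>u. x + u) ` mR \<subseteq> (\<lambda>u. y + u) ` mR"
    proof
      fix w assume "w \<in> (\<lambda>u. x + u) ` mR"
      then obtain u where u: "u \<in> mR" "w = x + u" by blast
      then have "w = y + ((x - y) + u)" by simp
      then show "w \<in> (\<lambda>u. y + u) ` mR" by (rule image_eqI) (rule mR_add[OF m u(1)])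
    qed
    moreover have "(\<lambda>u. y + u) ` mR \<subseteq> (\<lambda>u. x + u) ` mR"
    proof
      fix w assume "w \<in> (\<lambda>u. y + u) ` mR"
      then obtain u where u: "u \<in> mR" "w = y + u" by blast
      then have "w = x + (u - (x - y))" by simp
      then show "w \<in> (\<lambda>u. x + u) ` mR" by (rule image_eqI) (rule mR_diff[OF u(1) m])
    qed
    ultimately show ?thesis unfolding F_def by (rule subset_antisym)
  qed
  have F01: "F 0 \<noteq> F 1"
  proof
    assume "F 0 = F 1"
    then have "0 - 1 \<in> mR" by (rule Fdiff)
    then have "0 - (0 - 1) \<in> mR" using mR_diff zero_mR by blast
    then show False using one_notin_mR by simp
  qed
  have "{F 0, F 1} \<subseteq> F ` R" using R0 R1 by auto
  then have "card {F 0, F 1} \<le> card (F ` R)" using finR by (intro card_mono) auto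
  then have q2: "q \<ge> 2" using F01 q by simp
  let ?p = "monom 1 q - [:0, 1:] :: 'a poly"
  have c01: "coeff [:0, 1:] i = (if i = 1 then (1::'a) else 0)" for i
    by (cases i) (simp_all add: coeff_pCons split: nat.split)
  have cp: "coeff ?p i = (if i = q then 1 else 0) - (if i = 1 then 1 else 0)" for i
    by (simp add: coeff_monom c01)
  have dp: "degree ?p = q"
  proof -
    have "degree ?p \<le> q" by (rule degree_le) (use q2 in \<open>auto simp: coeff_monom c01\<close>)
    moreover have "coeff ?p q \<noteq> 0" using q2 zero_one by (auto simp: coeff_monom c01)
    ultimately show ?thesis using le_degree[of ?p q] by simp
  qed
  have lp: "lead_coeff ?p = 1" using dp q2 by (simp add: coeff_monom c01)
  have polyp: "poly ?p x = x ^ q - x" for x by (simp add: poly_monom)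
  have \<delta>Rep: "\<delta> \<notin> Rep"
  proof
    assume "\<delta> \<in> Rep"
    then have "\<delta> - \<delta> \<notin> II" using nc Rep(1) by blast
    then show False using II_0 by simp
  qed
  let ?Z = "insert \<delta> Rep"
  have "card ?Z = q + 1" using \<delta>Rep finRep cardRep by simp
  moreover have "card ?Z \<le> q"
  proof (rule root_bound[OF lp dp])
    show "finite ?Z" using finRep by simp
    show "\<forall>x\<in>?Z. \<forall>y\<in>?Z. x \<noteq> y \<longrightarrow> x - y \<notin> II"
    proof (intro ballI impI)
      fix x y assume x: "x \<in> ?Z" and y: "y \<in> ?Z" and xy: "x \<noteq> y"
      show "x - y \<notin> II"
      proof (cases "x = \<delta> \<or> y = \<delta>")
        case True
        then show ?thesis
        proof
          assume xd: "x = \<delta>"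
          then have "y \<in> Rep" using y xy by simp
          then have "y \<in> R" using Rep(1) by blast
          then show ?thesis using nc xd by blast
        next
          assume yd: "y = \<delta>"
          then have "x \<in> Rep" using x xy by simp
          then have "x \<in> R" using Rep(1) by blast
          then have nx: "\<delta> - x \<notin> II" using nc by blast
          show ?thesis
          proof
            assume "x - y \<in> II"
            then have "- (x - y) \<in> II" by (rule II_neg)
            then show False using nx yd by simp
          qed
        qed
      next
        case False
        then have xR: "x \<in> Rep" "y \<in> Rep" using x y by auto
        then have "F x \<noteq> F y" using inj_onD[OF Rep(2)] xy by blast
        show ?thesis
        proof
          assume "x - y \<in> II"
          moreover have "x - y \<in> R" using Rdiff xR Rep(1) by blast
          ultimately have "x - y \<in> mR" using R_II_mR by blast
          then have "F x = F y" by (rule Fcong)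
          then show False using \<open>F x \<noteq> F y\<close> by simp
        qed
      qed
    qed
    show "\<forall>x\<in>?Z. poly ?p x \<in> II"
    proof
      fix x assume x: "x \<in> ?Z"
      have fr: "\<sigma> x - x ^ q \<in> II" using frob unfolding q_def .
      show "poly ?p x \<in> II"
      proof (cases "x = \<delta>")
        case True
        have "x ^ q - x = (\<sigma> x - x) - (\<sigma> x - x ^ q)" by simp
        then show ?thesis using II_diff[OF d[folded True] fr] polyp by simp
      next
        case False
        then have "x \<in> R" using x Rep(1) by auto
        then have "x ^ q - x = - (\<sigma> x - x ^ q)" using sR by simp
        then show ?thesis using II_neg[OF fr] polyp by simp
      qed
    qed
  qed
  ultimately show False by simp
qed

lemma indep_II:
  assumes ind: "R_lin_indep R k \<beta>" and c: "\<forall>j\<in>{1..k}. c j \<in> R" and s: "(\<Sum>j=1..k. c j * \<beta> j) \<in> II"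
  shows "\<forall>j\<in>{1..k}. c j \<in> II"
proof
  fix j assume j: "j \<in> {1..k}"
  obtain w where w: "(\<Sum>j=1..k. c j * \<beta> j) = pi0 * w" using s II_E by blast
  define c' where "c' j = pi0 ^ (tt - 1) * c j" for j
  have "(\<Sum>j=1..k. c' j * \<beta> j) = pi0 ^ (tt - 1) * (\<Sum>j=1..k. c j * \<beta> j)"
    unfolding c'_def sum_distrib_left by (simp add: mult.assoc)
  also have "\<dots> = pi0 ^ tt * w"
  proof -
    obtain t' where "tt = Suc t'" using tt(2) by (cases tt) auto
    then show ?thesis unfolding w by (simp add: mult.assoc mult.commute mult.left_commute)
  qed
  finally have z: "(\<Sum>j=1..k. c' j * \<beta> j) = 0" using tt(1) by simp
  have "\<forall>j\<in>{1..k}. c' j \<in> R" unfolding c'_def using c Rmult Rpow pi0R by blast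
  then have "\<forall>j\<in>{1..k}. c' j = 0" using ind z unfolding R_lin_indep_def by blast
  then have cj0: "c' j = 0" using j by blast
  show "c j \<in> II"
  proof (rule ccontr)
    assume "c j \<notin> II"
    then have "c j \<notin> mR" using mR_II by blast
    then obtain v where "c j * v = 1" using notin_mR c j by blast
    then have "pi0 ^ (tt - 1) = c' j * v" unfolding c'_def by (simp add: mult.assoc)
    then have "pi0 ^ (tt - 1) = 0" using cj0 by simp
    then show False using tt(2,3) by simp
  qed
qed

sublocale coreloc \<sigma> R II
  by unfold_locales (auto simp: s_add s_mult s_one sR II_0 II_add II_mult unit one_II R0 R1 Rneg kerprop)

end




context gs
begin

lemma det_cong:
  assumes A: "A \<in> carrier_mat n n" and B: "B \<in> carrier_mat n n"
    and c: "\<And>i j. i < n \<Longrightarrow> j < n \<Longrightarrow> A $$ (i, j) - B $$ (i, j) \<in> II"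
  shows "det A - det B \<in> II"
proof -
  have "det A - det B = (\<Sum>p\<in>{p. p permutes {0..<n}}.
      signof p * ((\<Prod>i = 0..<n. A $$ (i, p i)) - (\<Prod>i = 0..<n. B $$ (i, p i))))"
    unfolding det_def'[OF A] det_def'[OF B] sum_subtractf[symmetric] by (simp add: right_diff_distrib)
  also have "\<dots> \<in> II"
  proof (rule II_sum)
    fix p assume "p \<in> {p. p permutes {0..<n}}"
    then have p: "p permutes {0..<n}" by simp
    have "(\<Prod>i = 0..<n. A $$ (i, p i)) - (\<Prod>i = 0..<n. B $$ (i, p i)) \<in> II"
    proof (rule prod_cong_I[of II])
      fix i assume i: "i \<in> {0..<n}"
      then have "p i \<in> {0..<n}" using permutes_in_image[OF p] by simp
      then show "A $$ (i, p i) - B $$ (i, p i) \<in> II" using c i by simp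
    qed (auto simp: II_add II_mult II_0)
    then show "signof p * ((\<Prod>i = 0..<n. A $$ (i, p i)) - (\<Prod>i = 0..<n. B $$ (i, p i))) \<in> II"
      by (rule II_multl)
  qed
  finally show ?thesis .
qed

lemma surj_mod:
  fixes M :: "'a mat" and N :: nat
  assumes inj: "\<And>y. (\<forall>c<N. (\<Sum>s<N. y s * M $$ (s, c)) \<in> II) \<Longrightarrow> (\<forall>s<N. y s \<in> II)"
  shows "\<exists>y. \<forall>c<N. (\<Sum>s<N. y s * M $$ (s, c)) - t c \<in> II"
proof -
  define V where "V = (\<Pi>\<^sub>E i\<in>{..<N}. (UNIV :: 'a set))"
  have finV: "finite V" unfolding V_def by (rule finite_PiE) (auto simp: finite_UNIV)
  define \<phi> where "\<phi> y = restrict (\<lambda>c. \<Sum>s<N. y s * M $$ (s, c)) {..<N}" for y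
  have \<phi>V: "\<phi> y \<in> V" for y unfolding \<phi>_def V_def by simp
  define cl where "cl y = {w \<in> V. \<forall>s<N. w s - y s \<in> II}" for y
  have self: "y \<in> cl y" if "y \<in> V" for y unfolding cl_def using that II_0 by simp
  have cl_eq: "cl y = cl w \<longleftrightarrow> (\<forall>s<N. y s - w s \<in> II)" if "y \<in> V" "w \<in> V" for y w
  proof
    assume "cl y = cl w"
    then have "y \<in> cl w" using self[OF that(1)] by simp
    then show "\<forall>s<N. y s - w s \<in> II" unfolding cl_def by simp
  next
    assume yw: "\<forall>s<N. y s - w s \<in> II"
    show "cl y = cl w"
    proof (rule equalityI; rule subsetI)
      fix v assume "v \<in> cl y"
      then have v: "v \<in> V" "\<forall>s<N. v s - y s \<in> II" unfolding cl_def by auto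
      have "\<forall>s<N. v s - w s \<in> II"
      proof (intro allI impI)
        fix s assume "s < N"
        then have "(v s - y s) + (y s - w s) \<in> II" using v yw II_add by blast
        then show "v s - w s \<in> II" by simp
      qed
      then show "v \<in> cl w" unfolding cl_def using v by simp
    next
      fix v assume "v \<in> cl w"
      then have v: "v \<in> V" "\<forall>s<N. v s - w s \<in> II" unfolding cl_def by auto
      have "\<forall>s<N. v s - y s \<in> II"
      proof (intro allI impI)
        fix s assume "s < N"
        then have "(v s - w s) - (y s - w s) \<in> II" using v yw II_diff by blast
        then show "v s - y s \<in> II" by simp
      qed
      then show "v \<in> cl y" unfolding cl_def using v by simp
    qed
  qed
  obtain Bs where Bs: "Bs \<subseteq> V" "inj_on cl Bs" "cl ` Bs = cl ` V"
    using reps_exist[where A=V and f=cl] by blast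
  define G where "G y = cl (\<phi> y)" for y
  have injG: "inj_on G Bs"
  proof (rule inj_onI)
    fix y w assume y: "y \<in> Bs" and w: "w \<in> Bs" and e: "G y = G w"
    have yV: "y \<in> V" and wV: "w \<in> V" using y w Bs(1) by auto
    have d: "\<forall>c<N. \<phi> y c - \<phi> w c \<in> II" using e cl_eq[OF \<phi>V \<phi>V] unfolding G_def by blast
    have "\<forall>c<N. (\<Sum>s<N. (y s - w s) * M $$ (s, c)) \<in> II"
    proof (intro allI impI)
      fix c assume c: "c < N"
      have "(\<Sum>s<N. (y s - w s) * M $$ (s, c)) = \<phi> y c - \<phi> w c"
        unfolding \<phi>_def using c by (simp add: left_diff_distrib sum_subtractf)
      then show "(\<Sum>s<N. (y s - w s) * M $$ (s, c)) \<in> II" using d c by simp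
    qed
    then have "\<forall>s<N. y s - w s \<in> II" using inj[of "\<lambda>s. y s - w s"] by blast
    then have "cl y = cl w" using cl_eq[OF yV wV] by blast
    then show "y = w" using inj_onD[OF Bs(2)] y w by blast
  qed
  have sub: "G ` Bs \<subseteq> cl ` V" unfolding G_def using \<phi>V by blast
  have "card (G ` Bs) = card (cl ` V)"
    using card_image[OF injG] card_image[OF Bs(2)] Bs(3) by simp
  then have GB: "G ` Bs = cl ` V" using card_subset_eq[OF _ sub] finV by simp
  define t' where "t' = restrict t {..<N}"
  have t'V: "t' \<in> V" unfolding t'_def V_def by simp
  then have "cl t' \<in> G ` Bs" using GB by blast
  then obtain y where y: "cl (\<phi> y) = cl t'" unfolding G_def by blast
  then have "\<forall>c<N. \<phi> y c - t' c \<in> II" using cl_eq[OF \<phi>V t'V] by blast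
  then have "\<forall>c<N. (\<Sum>s<N. y s * M $$ (s, c)) - t c \<in> II" unfolding \<phi>_def t'_def by simp
  then show ?thesis by blast
qed

lemma invertible_from_kernel:
  fixes M :: "'a mat" and N :: nat
  assumes M: "M \<in> carrier_mat N N"
    and inj: "\<And>y. (\<forall>c<N. (\<Sum>s<N. y s * M $$ (s, c)) \<in> II) \<Longrightarrow> (\<forall>s<N. y s \<in> II)"
  shows "invertible_mat M"
proof -
  have "\<forall>r. \<exists>y. \<forall>c<N. (\<Sum>s<N. y s * M $$ (s, c)) - (if r = c then 1 else 0) \<in> II"
  proof
    fix r
    show "\<exists>y. \<forall>c<N. (\<Sum>s<N. y s * M $$ (s, c)) - (if r = c then 1 else 0) \<in> II"
      by (rule surj_mod[OF inj])
  qed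
  from choice[OF this] obtain Y where Y0: "\<forall>r. \<forall>c<N. (\<Sum>s<N. Y r s * M $$ (s, c)) - (if r = c then 1 else 0) \<in> II"
    by blast
  have Y: "\<And>r c. c < N \<Longrightarrow> (\<Sum>s<N. Y r s * M $$ (s, c)) - (if r = c then 1 else 0) \<in> II"
    using Y0 by blast
  define Ym where "Ym = mat N N (\<lambda>(r, s). Y r s)"
  have Ym: "Ym \<in> carrier_mat N N" unfolding Ym_def by simp
  have YM: "Ym * M \<in> carrier_mat N N" using Ym M by simp
  have "det (Ym * M) - det (1\<^sub>m N) \<in> II"
  proof (rule det_cong[OF YM one_carrier_mat])
    fix i j assume i: "i < N" and j: "j < N"
    have "(Ym * M) $$ (i, j) = (\<Sum>s<N. Y i s * M $$ (s, j))"
      using i j Ym M unfolding Ym_def by (simp add: scalar_prod_def atLeast0LessThan)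
    then show "(Ym * M) $$ (i, j) - 1\<^sub>m N $$ (i, j) \<in> II" using Y[OF j, of i] i j by simp
  qed
  then have e: "det Ym * det M - 1 \<in> II" using det_mult[OF Ym M] by simp
  have "det M \<notin> II"
  proof
    assume "det M \<in> II"
    then have "det Ym * det M \<in> II" by (rule II_multl)
    then have "det Ym * det M - (det Ym * det M - 1) \<in> II" using II_diff e by blast
    then show False using one_II by simp
  qed
  then have "det M dvd 1" by (rule unit)
  then obtain d where "1 = det M * d" unfolding dvd_def by blast
  then have d: "det M * d = 1" by simp
  define B where "B = d \<cdot>\<^sub>m adj_mat M"
  have adj: "adj_mat M \<in> carrier_mat N N" "M * adj_mat M = det M \<cdot>\<^sub>m 1\<^sub>m N" "adj_mat M * M = det M \<cdot>\<^sub>m 1\<^sub>m N"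
    using adj_mat[OF M] by auto
  have one: "d \<cdot>\<^sub>m (det M \<cdot>\<^sub>m 1\<^sub>m N) = 1\<^sub>m N"
    by (rule eq_matI) (use d in \<open>auto simp: mult.commute\<close>)
  have "M * B = 1\<^sub>m N" unfolding B_def using mult_smult_distrib[OF M adj(1)] adj(2) one by simp
  moreover have "B * M = 1\<^sub>m N" unfolding B_def using mult_smult_assoc_mat[OF adj(1) M] adj(3) one by simp
  ultimately have i1: "inverts_mat M B" and i2: "inverts_mat B M"
    unfolding inverts_mat_def using M adj(1) unfolding B_def by auto
  have "square_mat M" using M by simp
  then show ?thesis unfolding invertible_mat_def using i1 i2 by blast
qed

end




lemma ring_inv_eq: "(b::'a::comm_ring_1) * b' = 1 \<Longrightarrow> ring_inv b = b'"
  unfolding ring_inv_def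
proof (rule the_equality)
  fix c assume "b * b' = 1" "b * c = 1"
  then have "c = c * (b * b')" by simp
  also have "\<dots> = (b * c) * b'" by (simp add: ac_simps)
  finally show "c = b'" using \<open>b * c = 1\<close> by simp
qed

theorem theorem3:
  fixes R :: "'a::comm_ring_1 set" and h :: "'a poly" and \<theta> :: 'a and \<sigma> :: "'a \<Rightarrow> 'a"
    and l :: nat and n :: "nat \<Rightarrow> nat" and a :: "nat \<Rightarrow> 'a" and \<beta> :: "nat \<Rightarrow> nat \<Rightarrow> 'a"
  assumes setting: "galois_setting R h \<theta> \<sigma>"
    and n_pos: "\<forall>i\<in>{1..l}. n i \<ge> 1"
    and a_units: "\<forall>i\<in>{1..l}. a i dvd 1"
    and cond_i: "\<forall>i j b. 1 \<le> i \<and> i < j \<and> j \<le> l \<and> b dvd 1 \<longrightarrow> (a i - twist \<sigma> (a j) b) dvd 1"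
    and cond_ii: "\<forall>i\<in>{1..l}. R_lin_indep R (n i) (\<beta> i)"
  shows "invertible_mat (Mmat \<sigma> l n a \<beta>)"
proof -
  interpret gs R h \<theta> \<sigma> by unfold_locales (rule setting)
  define N where "N = (\<Sum>i=1..l. n i)"
  define P where "P = Sigma {1..l} (\<lambda>i. {1..n i})"
  define L where "L = col_labels l n"
  define M where "M = Mmat \<sigma> l n a \<beta>"
  have setL: "set L = P"
  proof (rule equalityI; rule subsetI)
    fix x assume "x \<in> set L"
    then show "x \<in> P" unfolding L_def col_labels_def P_def by auto
  next
    fix x assume "x \<in> P"
    then obtain i j where ij: "x = (i, j)" "i \<in> {1..l}" "j \<in> {1..n i}" unfolding P_def by blast
    let ?F = "\<lambda>i. map (\<lambda>j. (i, j)) [1..<Suc (n i)]"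
    have "j \<in> set [1..<Suc (n i)]" using ij by (simp del: upt_Suc)
    then have "(i, j) \<in> set (?F i)" by (simp del: upt_Suc)
    moreover have "i \<in> set [1..<Suc l]" using ij by (simp del: upt_Suc)
    then have "?F i \<in> set (map ?F [1..<Suc l])" unfolding set_map by (rule imageI)
    ultimately show "x \<in> set L" unfolding L_def col_labels_def set_concat ij(1) by blast
  qed
  have lenL: "length L = N"
  proof -
    have "length L = sum_list (map (\<lambda>i. n i) [1..<Suc l])"
      unfolding L_def col_labels_def length_concat by (simp add: comp_def del: upt_Suc)
    also have "\<dots> = sum n (set [1..<Suc l])" by (rule sum_set_upt_conv_sum_list_nat[symmetric])
    also have "set [1..<Suc l] = {1..l}" by auto
    finally show ?thesis unfolding N_def by simp
  qed
  have finP: "finite P" unfolding P_def by simp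
  have cardP: "card P = N" unfolding P_def N_def by simp
  have Mc: "M \<in> carrier_mat N N" unfolding M_def Mmat_def N_def Let_def by simp
  have Me: "M $$ (s, c) = Dop \<sigma> (a (fst (L ! c))) s (\<beta> (fst (L ! c)) (snd (L ! c)))" if "s < N" "c < N" for s c
    using that unfolding M_def Mmat_def N_def[symmetric] Let_def L_def by (simp split: prod.split)
  have unit_notII: "x dvd 1 \<Longrightarrow> x \<notin> II" for x
    using unit_notin by (metis dvd_def)
  have adist: "i = j" if "i \<in> {1..l}" "j \<in> {1..l}" "a i = a j" for i j
  proof (rule ccontr)
    assume ne: "i \<noteq> j"
    have tw1: "twist \<sigma> x 1 = x" for x unfolding twist_def using ring_inv_eq[of "1::'a" 1] s_one by simp
    have one: "(1::'a) dvd 1" by simp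
    have "(0::'a) dvd 1"
    proof (cases "i < j")
      case True
      then have "(a i - twist \<sigma> (a j) 1) dvd 1" using cond_i that(1,2) one by auto
      then show ?thesis using tw1 that(3) by simp
    next
      case False
      then have "j < i" using ne by simp
      then have "(a j - twist \<sigma> (a i) 1) dvd 1" using cond_i that(1,2) one by auto
      then show ?thesis using tw1 that(3) by simp
    qed
    then show False using zero_one by simp
  qed
  have tw: "\<forall>k\<in>P. \<forall>k'\<in>P. a (fst k) \<noteq> a (fst k') \<longrightarrow>
      (\<forall>b b'. b * b' = 1 \<longrightarrow> a (fst k) - \<sigma> b * a (fst k') * b' \<notin> II)"
  proof (intro ballI impI allI)
    fix k k' and b b' :: 'a assume k: "k \<in> P" and k': "k' \<in> P" and ne: "a (fst k) \<noteq> a (fst k')" and bb: "b * b' = 1"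
    define i where "i = fst k"
    define j where "j = fst k'"
    have ij: "1 \<le> i" "i \<le> l" "1 \<le> j" "j \<le> l" "i \<noteq> j"
      using k k' ne unfolding P_def i_def j_def by auto
    have b'b: "b' * b = 1" using bb by (simp add: mult.commute)
    have ub: "b dvd 1" "b' dvd 1" using bb b'b by (metis dvdI)+
    show "a (fst k) - \<sigma> b * a (fst k') * b' \<notin> II"
    proof (cases "i < j")
      case True
      then have "(a i - twist \<sigma> (a j) b) dvd 1" using cond_i ij ub by blast
      moreover have "twist \<sigma> (a j) b = \<sigma> b * a j * b'" unfolding twist_def using ring_inv_eq[OF bb] by simp
      ultimately show ?thesis using unit_notII unfolding i_def j_def by simp
    next
      case False
      then have "j < i" using ij by simp
      then have "(a j - twist \<sigma> (a i) b') dvd 1" using cond_i ij ub by blast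
      moreover have "twist \<sigma> (a i) b' = \<sigma> b' * a i * b" unfolding twist_def using ring_inv_eq[OF b'b] by simp
      ultimately have u: "a j - \<sigma> b' * a i * b \<notin> II" using unit_notII by simp
      have sb: "\<sigma> b' * \<sigma> b = 1" using b'b s_mult s_one by metis
      show ?thesis
      proof
        assume X: "a (fst k) - \<sigma> b * a (fst k') * b' \<in> II"
        have "- (\<sigma> b' * (a i - \<sigma> b * a j * b') * b) = a j * ((\<sigma> b' * \<sigma> b) * (b' * b)) - \<sigma> b' * a i * b"
          by (simp add: algebra_simps)
        also have "\<dots> = a j - \<sigma> b' * a i * b" using sb b'b by simp
        finally have "a j - \<sigma> b' * a i * b = - (\<sigma> b' * (a i - \<sigma> b * a j * b') * b)" by simp
        moreover have "- (\<sigma> b' * (a i - \<sigma> b * a j * b') * b) \<in> II"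
          using X II_neg II_mult II_multl unfolding i_def j_def by blast
        ultimately show False using u by simp
      qed
    qed
  qed
  have ind: "indep_mod R II P (\<lambda>p. a (fst p)) (\<lambda>p. \<beta> (fst p) (snd p))"
    unfolding indep_mod_def
  proof (intro allI impI ballI)
    fix c :: "nat \<times> nat \<Rightarrow> 'a" and \<alpha> :: 'a and k
    assume cR: "\<forall>k\<in>P. c k \<in> R"
      and S: "(\<Sum>k\<in>{k\<in>P. a (fst k) = \<alpha>}. c k * \<beta> (fst k) (snd k)) \<in> II"
      and k: "k \<in> P" and k\<alpha>: "a (fst k) = \<alpha>"
    define i0 where "i0 = fst k"
    have i0: "i0 \<in> {1..l}" using k unfolding P_def i0_def by auto
    have cls: "{k\<in>P. a (fst k) = \<alpha>} = (\<lambda>j. (i0, j)) ` {1..n i0}"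
    proof (rule equalityI; rule subsetI)
      fix x assume "x \<in> {k\<in>P. a (fst k) = \<alpha>}"
      then have x: "x \<in> P" "a (fst x) = a i0" using k\<alpha> unfolding i0_def by auto
      then have "fst x = i0" using adist i0 unfolding P_def by auto
      then show "x \<in> (\<lambda>j. (i0, j)) ` {1..n i0}" using x(1) unfolding P_def by force
    next
      fix x assume "x \<in> (\<lambda>j. (i0, j)) ` {1..n i0}"
      then show "x \<in> {k\<in>P. a (fst k) = \<alpha>}" using i0 k\<alpha> unfolding P_def i0_def by auto
    qed
    have "(\<Sum>k\<in>{k\<in>P. a (fst k) = \<alpha>}. c k * \<beta> (fst k) (snd k)) = (\<Sum>j=1..n i0. c (i0, j) * \<beta> i0 j)"
      unfolding cls by (subst sum.reindex) (auto simp: inj_on_def)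
    then have S': "(\<Sum>j=1..n i0. c (i0, j) * \<beta> i0 j) \<in> II" using S by simp
    have cR': "\<forall>j\<in>{1..n i0}. c (i0, j) \<in> R" using cR i0 unfolding P_def by auto
    have "\<forall>j\<in>{1..n i0}. c (i0, j) \<in> II"
      using indep_II[OF cond_ii[rule_format, OF i0] cR' S'] .
    moreover have "snd k \<in> {1..n i0}" using k unfolding P_def i0_def by auto
    ultimately have "c (i0, snd k) \<in> II" by blast
    then show "c k \<in> II" unfolding i0_def by simp
  qed
  have units: "\<forall>k\<in>P. a (fst k) dvd 1" using a_units unfolding P_def by auto
  show ?thesis
    unfolding M_def[symmetric]
  proof (rule invertible_from_kernel[OF Mc])
    fix y :: "nat \<Rightarrow> 'a" assume H: "\<forall>c<N. (\<Sum>s<N. y s * M $$ (s, c)) \<in> II"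
    have "\<forall>p\<in>P. (\<Sum>s<N. y s * Dop \<sigma> (a (fst p)) s (\<beta> (fst p) (snd p))) \<in> II"
    proof
      fix p assume "p \<in> P"
      then obtain c where c: "c < N" "L ! c = p" using setL lenL by (metis in_set_conv_nth)
      have "(\<Sum>s<N. y s * M $$ (s, c)) = (\<Sum>s<N. y s * Dop \<sigma> (a (fst p)) s (\<beta> (fst p) (snd p)))"
        using Me c by simp
      moreover have "(\<Sum>s<N. y s * M $$ (s, c)) \<in> II" using H c(1) by blast
      ultimately show "(\<Sum>s<N. y s * Dop \<sigma> (a (fst p)) s (\<beta> (fst p) (snd p))) \<in> II" by simp
    qed
    then show "\<forall>s<N. y s \<in> II"
      using core[OF finP cardP units tw ind] by blast
  qed
qed


end
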